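(* Let $T$ be a subset of $\mathbb{N}_0^d$ whose affine span has dimension $1$. Then the $1$-completion of $T$ equals $\Lambda(T)\cap\mathbb{N}_0^d$.
   Context: $\mathbb{N}_0=\{0,1,2,\dots\}$. For nonempty $\Gamma\subseteq\mathbb{N}_0^d$, $\Lambda(\Gamma)$ is the coset in $\mathbb{Z}^d$ generated by $\Gamma$ (smallest coset of a subgroup of $\mathbb{Z}^d$ containing $\Gamma$); each $\lambda\in\Lambda(\Gamma)$ can be written $\lambda=\gamma+\sum_{\alpha\in\Gamma,\alpha\neq\gamma}m_{\gamma,\alpha}(\alpha-\gamma)$ with $\gamma\in\Gamma$ and integers $m_{\gamma,\alpha}$, finitely many nonzero. $d(\Gamma,\lambda)$ is the infimum over all such representations of $\max\big(\sum_{m_{\gamma,\alpha}>0}m_{\gamma,\alpha},-\sum_{m_{\gamma,\alpha}<0}m_{\gamma,\alpha}\big)$, and $E_n(\Gamma)=\{\lambda\in\Lambda(\Gamma)\cap\mathbb{N}_0^d:d(\Gamma,\lambda)\leq n\}$. Set $E_n^1(T)=E_n(T)$, $E_n^{k+1}(T)=E_n(E_n^k(T))$, and the $n$-completion $E_n^\infty(T)=\bigcup_{k\geq1}E_n^k(T)$. *)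

theory Defs
  imports "HOL-Analysis.Analysis"
begin

text \<open>Points of Z^d are modelled as int ^ 'd (d = CARD('d), arbitrary but fixed).\<close>

definition Nd :: "(int ^ 'd) set" where
  "Nd = {x. \<forall>i. 0 \<le> x $ i}"

definition is_subgroup :: "(int ^ 'd) set \<Rightarrow> bool" where
  "is_subgroup H \<longleftrightarrow> 0 \<in> H \<and> (\<forall>x\<in>H. \<forall>y\<in>H. x - y \<in> H)"

definition is_coset :: "(int ^ 'd) set \<Rightarrow> bool" where
  "is_coset C \<longleftrightarrow> (\<exists>a H. is_subgroup H \<and> C = (\<lambda>h. a + h) ` H)"

definition Lam :: "(int ^ 'd) set \<Rightarrow> (int ^ 'd) set" where
  "Lam G = \<Inter> {C. is_coset C \<and> G \<subseteq> C}"

definition is_rep :: "(int ^ 'd) set \<Rightarrow> int ^ 'd \<Rightarrow> int ^ 'd \<Rightarrow> (int ^ 'd \<Rightarrow> int) \<Rightarrow> bool" where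
  "is_rep G l g m \<longleftrightarrow> g \<in> G \<and> finite {a. m a \<noteq> 0} \<and>
     (\<forall>a. m a \<noteq> 0 \<longrightarrow> a \<in> G \<and> a \<noteq> g) \<and>
     l = g + (\<Sum>a\<in>{a. m a \<noteq> 0}. m a *s (a - g))"

definition rep_cost :: "(int ^ 'd \<Rightarrow> int) \<Rightarrow> nat" where
  "rep_cost m = nat (max (\<Sum>a\<in>{a. m a > 0}. m a) (- (\<Sum>a\<in>{a. m a < 0}. m a)))"

definition dist_G :: "(int ^ 'd) set \<Rightarrow> int ^ 'd \<Rightarrow> enat" where
  "dist_G G l = (INF p \<in> {(g, m). is_rep G l g m}. enat (rep_cost (snd p)))"

definition En :: "nat \<Rightarrow> (int ^ 'd) set \<Rightarrow> (int ^ 'd) set" where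
  "En n G = {l \<in> Lam G \<inter> Nd. dist_G G l \<le> enat n}"

definition En_iter :: "nat \<Rightarrow> nat \<Rightarrow> (int ^ 'd) set \<Rightarrow> (int ^ 'd) set" where
  "En_iter n k T = (En n ^^ k) T"

definition En_completion :: "nat \<Rightarrow> (int ^ 'd) set \<Rightarrow> (int ^ 'd) set" where
  "En_completion n T = (\<Union>k\<in>{1..}. En_iter n k T)"

definition to_real :: "int ^ 'd \<Rightarrow> real ^ 'd" where
  "to_real x = (\<chi> i. real_of_int (x $ i))"

end

theory Submission
  imports Defs
begin


lemma coset_closed:
  assumes "is_coset C" "a \<in> C" "b \<in> C" "c \<in> C"
  shows "a - b + c \<in> C"
proof -
  obtain a0 H where H: "is_subgroup H" "C = (\<lambda>h. a0 + h) ` H"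
    using assms(1) unfolding is_coset_def by blast
  obtain ha hb hc where h: "ha \<in> H" "hb \<in> H" "hc \<in> H" "a = a0 + ha" "b = a0 + hb" "c = a0 + hc"
    using assms(2-4) H(2) by blast
  have 0: "0 \<in> H" and sub: "\<And>x y. x \<in> H \<Longrightarrow> y \<in> H \<Longrightarrow> x - y \<in> H"
    using H(1) unfolding is_subgroup_def by auto
  have "0 - hc \<in> H" using sub 0 h by blast
  then have "(ha - hb) - (0 - hc) \<in> H" using sub h by blast
  moreover have "a - b + c = a0 + ((ha - hb) - (0 - hc))" using h by (simp add: algebra_simps)
  ultimately show ?thesis using H(2) by blast
qed

lemma Lam_sub: "G \<subseteq> Lam G" unfolding Lam_def by blast

lemma Lam_least: "is_coset C \<Longrightarrow> G \<subseteq> C \<Longrightarrow> Lam G \<subseteq> C" unfolding Lam_def by blast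

lemma Lam_mono2: "G \<subseteq> Lam T \<Longrightarrow> Lam G \<subseteq> Lam T"
  unfolding Lam_def by blast

lemma Lam_closed: "a \<in> Lam G \<Longrightarrow> b \<in> Lam G \<Longrightarrow> c \<in> Lam G \<Longrightarrow> a - b + c \<in> Lam G"
  unfolding Lam_def using coset_closed by blast

lemma dist_le: "is_rep G l g m \<Longrightarrow> rep_cost m \<le> n \<Longrightarrow> dist_G G l \<le> enat n"
  unfolding dist_G_def by (rule INF_lower2[of "(g,m)"]) auto

lemma En_abc:
  assumes "a \<in> G" "b \<in> G" "c \<in> G" "a - b + c \<in> Nd"
  shows "a - b + c \<in> En 1 G"
proof -
  have L: "a - b + c \<in> Lam G" using Lam_closed Lam_sub assms(1-3) by blast
  have "dist_G G (a - b + c) \<le> enat 1"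
  proof (cases "a = b")
    case True
    have "is_rep G (a - b + c) c (\<lambda>_. 0)" using True assms unfolding is_rep_def by simp
    moreover have "rep_cost (\<lambda>_. 0::int) \<le> 1" unfolding rep_cost_def by simp
    ultimately show ?thesis by (rule dist_le)
  next
    case ab: False
    show ?thesis
    proof (cases "b = c")
      case True
      have "is_rep G (a - b + c) a (\<lambda>_. 0)" using True assms unfolding is_rep_def by simp
      moreover have "rep_cost (\<lambda>_. 0::int) \<le> 1" unfolding rep_cost_def by simp
      ultimately show ?thesis by (rule dist_le)
    next
      case bc: False
      show ?thesis
      proof (cases "a = c")
        case True
        let ?m = "\<lambda>x. if x = b then -1 else 0::int"
        have s: "{x. ?m x \<noteq> 0} = {b}" by auto
        have eq: "a - b + c = c + (\<Sum>x\<in>{b}. ?m x *s (x - c))"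
          by (simp add: True vec_eq_iff algebra_simps)
        have "is_rep G (a - b + c) c ?m" using True assms bc unfolding is_rep_def s
          using eq by auto
        moreover have "{x. ?m x > 0} = {}" "{x. ?m x < 0} = {b}" by auto
        then have "rep_cost ?m \<le> 1" unfolding rep_cost_def by simp
        ultimately show ?thesis by (rule dist_le)
      next
        case ac: False
        let ?m = "\<lambda>x. if x = a then 1 else if x = b then -1 else 0::int"
        have s: "{x. ?m x \<noteq> 0} = {a, b}" by auto
        have eq: "a - b + c = c + (\<Sum>x\<in>{a,b}. ?m x *s (x - c))"
        proof -
          have "(\<Sum>x\<in>{a,b}. ?m x *s (x - c)) = 1 *s (a - c) + (-1) *s (b - c)"
            using ab by simp
          then show ?thesis by (simp add: vec_eq_iff algebra_simps)
        qed
        have "is_rep G (a - b + c) c ?m" using ac ab assms bc unfolding is_rep_def s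
          using eq by auto
        moreover have "{x. ?m x > 0} = {a}" "{x. ?m x < 0} = {b}" using ab by auto
        then have "rep_cost ?m \<le> 1" unfolding rep_cost_def by simp
        ultimately show ?thesis by (rule dist_le)
      qed
    qed
  qed
  then show ?thesis unfolding En_def using L assms(4) by simp
qed

lemma En_sub: "En n G \<subseteq> Lam G \<inter> Nd" unfolding En_def by auto

lemma En_incl: "G \<subseteq> Nd \<Longrightarrow> G \<subseteq> En 1 G"
  using En_abc[of c G c c for c] by auto

lemma iter_Suc: "En_iter n (Suc k) T = En n (En_iter n k T)"
  unfolding En_iter_def by simp

lemma iter_Nd: "T \<subseteq> Nd \<Longrightarrow> En_iter n k T \<subseteq> Nd"
  by (cases k) (auto simp: iter_Suc En_def En_iter_def)

lemma iter_Lam: "T \<subseteq> Nd \<Longrightarrow> En_iter n k T \<subseteq> Lam T \<inter> Nd"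
proof (induction k)
  case 0 then show ?case using Lam_sub by (auto simp: En_iter_def)
next
  case (Suc k)
  then show ?case using En_sub[of n "En_iter n k T"] Lam_mono2[of "En_iter n k T" T]
    by (auto simp: iter_Suc)
qed

lemma iter_mono: "T \<subseteq> Nd \<Longrightarrow> j \<le> k \<Longrightarrow> En_iter 1 j T \<subseteq> En_iter 1 k T"
proof (rule lift_Suc_mono_le[of "\<lambda>k. En_iter 1 k T"])
  fix n assume "T \<subseteq> Nd"
  then show "En_iter 1 n T \<subseteq> En_iter 1 (Suc n) T"
    unfolding iter_Suc by (rule En_incl[OF iter_Nd])
qed

lemma compl_upper: "T \<subseteq> Nd \<Longrightarrow> En_completion 1 T \<subseteq> Lam T \<inter> Nd"
  unfolding En_completion_def using iter_Lam by blast

lemma compl_T: "T \<subseteq> Nd \<Longrightarrow> T \<subseteq> En_completion 1 T"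
  unfolding En_completion_def using iter_mono[of T 0 1] by (force simp: En_iter_def)

lemma compl_closed:
  assumes "T \<subseteq> Nd" "a \<in> En_completion 1 T" "b \<in> En_completion 1 T" "c \<in> En_completion 1 T"
    "a - b + c \<in> Nd"
  shows "a - b + c \<in> En_completion 1 T"
proof -
  obtain i j k where "a \<in> En_iter 1 i T" "b \<in> En_iter 1 j T" "c \<in> En_iter 1 k T"
    using assms unfolding En_completion_def by blast
  then have "a \<in> En_iter 1 (max i (max j k)) T" "b \<in> En_iter 1 (max i (max j k)) T"
     "c \<in> En_iter 1 (max i (max j k)) T"
    using iter_mono[OF assms(1)] by (meson max.cobounded1 max.cobounded2 order_trans subsetD)+
  then have "a - b + c \<in> En_iter 1 (Suc (max i (max j k))) T"
    using En_abc assms(5) by (simp add: iter_Suc)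
  then show ?thesis unfolding En_completion_def by force
qed



lemma main_comb:
  fixes C L :: "(int^'d) set"
  assumes CL: "C \<subseteq> L" and CN: "C \<subseteq> Nd"
  and closedC: "\<And>a b c. a\<in>C \<Longrightarrow> b\<in>C \<Longrightarrow> c\<in>C \<Longrightarrow> a - b + c \<in> Nd \<Longrightarrow> a - b + c \<in> C"
  and closedL: "\<And>a b c. a\<in>L \<Longrightarrow> b\<in>L \<Longrightarrow> c\<in>L \<Longrightarrow> a - b + c \<in> L"
  and inj: "\<And>x y. x\<in>L \<Longrightarrow> y\<in>L \<Longrightarrow> x$i = y$i \<Longrightarrow> x = y"
  and conv: "\<And>x y z. x\<in>L \<Longrightarrow> y\<in>L \<Longrightarrow> z\<in>L \<Longrightarrow> x\<in>Nd \<Longrightarrow> z\<in>Nd \<Longrightarrow> x$i \<le> y$i \<Longrightarrow> y$i \<le> z$i \<Longrightarrow> y\<in>Nd"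
  and pq: "p \<in> C" "q \<in> C" "p$i \<noteq> q$i"
  shows "\<exists>b w. (\<forall>x\<in>C. \<exists>k::int. x = b + k *s w) \<and> (\<forall>k::int. b + k *s w \<in> Nd \<longrightarrow> b + k *s w \<in> C)"
proof -
  obtain xy where xy: "(\<lambda>(x,y). x\<in>C \<and> y\<in>C \<and> x$i \<noteq> y$i) xy"
    "\<forall>z. (\<lambda>(x,y). x\<in>C \<and> y\<in>C \<and> x$i \<noteq> y$i) z \<longrightarrow> (\<lambda>(x,y). nat \<bar>x$i - y$i\<bar>) xy \<le> (\<lambda>(x,y). nat \<bar>x$i - y$i\<bar>) z"
    using ex_has_least_nat[of "\<lambda>(x,y). x\<in>C \<and> y\<in>C \<and> x$i \<noteq> y$i" "(p,q)" "\<lambda>(x,y). nat \<bar>x$i - y$i\<bar>"] pq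
    by auto
  obtain x1 x2 where xx: "xy = (x1, x2)" by (cases xy)
  have x12: "x1 \<in> C" "x2 \<in> C" "x1$i \<noteq> x2$i" using xy(1) xx by auto
  have m12: "\<bar>x1$i - x2$i\<bar> \<le> \<bar>x$i - y$i\<bar>" if "x\<in>C" "y\<in>C" "x$i \<noteq> y$i" for x y
  proof -
    have "nat \<bar>x1$i - x2$i\<bar> \<le> nat \<bar>x$i - y$i\<bar>" using xy(2)[rule_format, of "(x,y)"] that xx by simp
    then show ?thesis by (simp add: nat_le_eq_zle)
  qed
  obtain a b where ab: "a \<in> C" "b \<in> C" "b$i < a$i"
    and minab: "\<And>x y. x\<in>C \<Longrightarrow> y\<in>C \<Longrightarrow> x$i \<noteq> y$i \<Longrightarrow> a$i - b$i \<le> \<bar>x$i - y$i\<bar>"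
  proof (cases "x1 $ i < x2 $ i")
    case True
    show ?thesis
    proof (rule that[of x2 x1])
      show "x2\<in>C" "x1\<in>C" "x1$i < x2$i" using x12 True by auto
      fix x y assume h: "x\<in>C" "y\<in>C" "x$i\<noteq>y$i"
      then show "x2$i - x1$i \<le> \<bar>x$i-y$i\<bar>" using m12[OF h] True by linarith
    qed
  next
    case False
    show ?thesis
    proof (rule that[of x1 x2])
      show "x1\<in>C" "x2\<in>C" "x2$i < x1$i" using x12 False by auto
      fix x y assume h: "x\<in>C" "y\<in>C" "x$i\<noteq>y$i"
      then show "x1$i - x2$i \<le> \<bar>x$i-y$i\<bar>" using m12[OF h] False by linarith
    qed
  qed
  define w where "w = a - b"
  have wi: "w$i = a$i - b$i" by (simp add: w_def)
  have bN: "b \<in> Nd" "a \<in> Nd" using ab CN by auto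
  have bL: "b \<in> L" "a \<in> L" using ab CL by auto
  have part1: "\<exists>k::int. x = b + k *s w" if "x \<in> C" for x
    using that
  proof (induction "nat \<bar>x$i - b$i\<bar>" arbitrary: x rule: less_induct)
    case less
    have xL: "x \<in> L" and xN: "x \<in> Nd" using less.prems CL CN by auto
    consider "a$i \<le> x$i" | "x$i < b$i" | "b$i \<le> x$i" "x$i < a$i" by linarith
    then show ?case
    proof cases
      case 1
      define x' where "x' = b - a + x"
      have x'L: "x' \<in> L" unfolding x'_def using closedL bL xL by blast
      have x'i: "x'$i = x$i - w$i" by (simp add: x'_def wi)
      have "x' \<in> Nd" using conv[OF bL(1) x'L xL bN(1) xN] x'i wi 1 ab(3) by simp
      then have "x' \<in> C" unfolding x'_def using closedC ab less.prems by blast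
      moreover have "nat \<bar>x'$i - b$i\<bar> < nat \<bar>x$i - b$i\<bar>" using x'i wi 1 ab by simp
      ultimately obtain k where "x' = b + k *s w" using less.hyps by blast
      then have "x = b + (k+1) *s w" unfolding x'_def w_def by (simp add: vec_eq_iff algebra_simps)
      then show ?thesis by blast
    next
      case 2
      define x' where "x' = a - b + x"
      have x'L: "x' \<in> L" unfolding x'_def using closedL bL xL by blast
      have x'i: "x'$i = x$i + w$i" by (simp add: x'_def wi)
      show ?thesis
      proof (cases "x'$i \<le> b$i")
        case True
        have "x' \<in> Nd" using conv[OF xL x'L bL(1) xN bN(1)] x'i wi True ab by simp
        then have "x' \<in> C" unfolding x'_def using closedC ab less.prems by blast
        moreover have "nat \<bar>x'$i - b$i\<bar> < nat \<bar>x$i - b$i\<bar>" using x'i wi 2 ab True by simp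
        ultimately obtain k where "x' = b + k *s w" using less.hyps by blast
        then have "x = b + (k-1) *s w" unfolding x'_def w_def by (simp add: vec_eq_iff algebra_simps)
        then show ?thesis by blast
      next
        case False
        have "x' \<in> Nd" using conv[OF bL(1) x'L bL(2) bN(1) bN(2)] x'i wi False 2 by simp
        then have "x' \<in> C" unfolding x'_def using closedC ab less.prems by blast
        then have "a$i - b$i \<le> \<bar>x'$i - b$i\<bar>" using minab[OF \<open>x' \<in> C\<close> ab(2)] False by simp
        then show ?thesis using x'i wi False 2 by simp
      qed
    next
      case 3
      have "x = b"
      proof (rule ccontr)
        assume "x \<noteq> b"
        then have "x$i \<noteq> b$i" using inj xL bL by blast
        then show False using minab[OF less.prems ab(2)] 3 by simp
      qed
      then have "x = b + 0 *s w" by simp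
      then show ?thesis by blast
    qed
  qed
  have Nconv: "b + k *s w \<in> Nd" if "b + k' *s w \<in> Nd" "0 \<le> k" "k \<le> k'" for k k'
  proof -
    have "0 \<le> b$j + k * w$j" for j
    proof -
      have "0 \<le> b$j" "0 \<le> b$j + k' * w$j" using that bN unfolding Nd_def by auto
      show ?thesis
      proof (cases "0 \<le> w$j")
        case True then have "0 \<le> k * w$j" using that(2) by simp
        then show ?thesis using \<open>0 \<le> b$j\<close> by linarith
      next
        case False then have "k' * w$j \<le> k * w$j" using that(3) mult_right_mono_neg by simp
        then show ?thesis using \<open>0 \<le> b$j + k' * w$j\<close> by linarith
      qed
    qed
    then show ?thesis unfolding Nd_def by simp
  qed
  have Nconv2: "b + k *s w \<in> Nd" if "b + k' *s w \<in> Nd" "k \<le> 0" "k' \<le> k" for k k'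
  proof -
    have "0 \<le> b$j + k * w$j" for j
    proof -
      have "0 \<le> b$j" "0 \<le> b$j + k' * w$j" using that bN unfolding Nd_def by auto
      show ?thesis
      proof (cases "w$j \<le> 0")
        case True then have "0 \<le> k * w$j" using that(2) by (simp add: mult_nonpos_nonpos)
        then show ?thesis using \<open>0 \<le> b$j\<close> by linarith
      next
        case False then have "k' * w$j \<le> k * w$j" using that(3) mult_right_mono by simp
        then show ?thesis using \<open>0 \<le> b$j + k' * w$j\<close> by linarith
      qed
    qed
    then show ?thesis unfolding Nd_def by simp
  qed
  have up: "b + int n *s w \<in> Nd \<longrightarrow> b + int n *s w \<in> C" for n
  proof (induction n)
    case 0 then show ?case using ab by simp
  next
    case (Suc n)
    show ?case
    proof
      assume h: "b + int (Suc n) *s w \<in> Nd"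
      have "b + int n *s w \<in> Nd" using Nconv[OF h] by simp
      then have "b + int n *s w \<in> C" using Suc by blast
      moreover have "b + int (Suc n) *s w = a - b + (b + int n *s w)"
        unfolding w_def by (simp add: vec_eq_iff algebra_simps)
      ultimately show "b + int (Suc n) *s w \<in> C" using closedC ab h by metis
    qed
  qed
  have down: "b + (- int n) *s w \<in> Nd \<longrightarrow> b + (- int n) *s w \<in> C" for n
  proof (induction n)
    case 0 then show ?case using ab by simp
  next
    case (Suc n)
    show ?case
    proof
      assume h: "b + (- int (Suc n)) *s w \<in> Nd"
      have "b + (- int n) *s w \<in> Nd" using Nconv2[OF h] by simp
      then have "b + (- int n) *s w \<in> C" using Suc by blast
      moreover have "b + (- int (Suc n)) *s w = b - a + (b + (- int n) *s w)"
        unfolding w_def by (simp add: vec_eq_iff algebra_simps)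
      ultimately show "b + (- int (Suc n)) *s w \<in> C" using closedC ab h by metis
    qed
  qed
  have "b + k *s w \<in> Nd \<longrightarrow> b + k *s w \<in> C" for k :: int
  proof (cases "0 \<le> k")
    case True
    then show ?thesis using up[of "nat k"] by simp
  next
    case False
    then show ?thesis using down[of "nat (-k)"] by simp
  qed
  then show ?thesis using part1 by blast
qed



lemma to_real_comp[simp]: "to_real x $ j = real_of_int (x $ j)"
  by (simp add: to_real_def)

lemma to_real_add: "to_real (x + y) = to_real x + to_real y"
  by (simp add: vec_eq_iff)

lemma to_real_diff: "to_real (x - y) = to_real x - to_real y"
  by (simp add: vec_eq_iff)

lemma to_real_0: "to_real 0 = 0"
  by (simp add: vec_eq_iff)

lemma to_real_inj: "to_real x = to_real y \<Longrightarrow> x = y"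
  by (simp add: vec_eq_iff)

lemma conv_real:
  fixes P U X Y Z :: "real^'d"
  assumes U: "U$i \<noteq> 0" and X: "X = P + rx *\<^sub>R U" and Y: "Y = P + ry *\<^sub>R U"
    and Z: "Z = P + rz *\<^sub>R U"
    and le: "X$i \<le> Y$i" "Y$i \<le> Z$i" and nn: "0 \<le> X$j" "0 \<le> Z$j"
  shows "0 \<le> Y$j"
proof -
  define s where "s = ry - rx"
  define t where "t = rz - ry"
  have e: "Y$j * (s+t) = X$j * t + Z$j * s"
    by (simp add: X Y Z s_def t_def algebra_simps)
  have si: "0 \<le> s * U$i" using le(1) by (simp add: X Y s_def algebra_simps)
  have ti: "0 \<le> t * U$i" using le(2) by (simp add: Z Y t_def algebra_simps)
  show ?thesis
  proof (cases "s + t = 0")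
    case True
    have "s = 0"
    proof (cases "U$i > 0")
      case True
      then have "0 \<le> s" "0 \<le> t" using si ti zero_le_mult_iff by (auto simp: zero_le_mult_iff)
      then show ?thesis using \<open>s + t = 0\<close> by linarith
    next
      case False
      then have "U$i < 0" using U by simp
      then have "s \<le> 0" "t \<le> 0" using si ti by (auto simp: zero_le_mult_iff)
      then show ?thesis using \<open>s + t = 0\<close> by linarith
    qed
    then have "Y = X" by (simp add: X Y s_def)
    then show ?thesis using nn by simp
  next
    case False
    show ?thesis
    proof (cases "U$i > 0")
      case True
      then have "0 \<le> s" "0 \<le> t" using si ti by (auto simp: zero_le_mult_iff)
      then have "0 < s + t" "0 \<le> X$j * t + Z$j * s" using False nn by auto
      then show ?thesis using e by (metis zero_le_mult_iff not_le)
    next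
      case False
      then have "U$i < 0" using U by simp
      then have "s \<le> 0" "t \<le> 0" using si ti by (auto simp: zero_le_mult_iff)
      then have "s + t < 0" "X$j * t + Z$j * s \<le> 0" using \<open>s + t \<noteq> 0\<close> nn
        by (auto simp: mult_nonneg_nonpos add_nonpos_nonpos)
      then show ?thesis using e by (metis mult_le_0_iff not_le)
    qed
  qed
qed



theorem lemma3p2:
  fixes T :: "(int ^ 'd) set"
  assumes "T \<subseteq> Nd"
    and "aff_dim (to_real ` T) = 1"
  shows "En_completion 1 T = Lam T \<inter> Nd"
proof
  show "En_completion 1 T \<subseteq> Lam T \<inter> Nd" using compl_upper[OF assms(1)] .
next
  obtain p q where pq: "p \<in> T" "q \<in> T" "p \<noteq> q"
  proof (rule ccontr)
    assume "\<not> thesis"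
    then have "\<forall>x\<in>T. \<forall>y\<in>T. x = y" using that by blast
    then have "T = {} \<or> (\<exists>x. T = {x})" by blast
    then have "aff_dim (to_real ` T) \<le> 0" by auto
    then show False using assms(2) by simp
  qed
  obtain i where i: "p$i \<noteq> q$i" using pq(3) by (auto simp: vec_eq_iff)
  define u where "u = q - p"
  have ui: "to_real u $ i \<noteq> 0" using i by (simp add: u_def)
  define L where "L = {x. \<exists>r::real. to_real x = to_real p + r *\<^sub>R to_real u}"
  define H where "H = {h. \<exists>r::real. to_real h = r *\<^sub>R to_real u}"
  have Hsub: "is_subgroup H" unfolding is_subgroup_def H_def
  proof (intro conjI ballI)
    have "to_real 0 = 0 *\<^sub>R to_real u" by (simp add: to_real_0)
    then show "0 \<in> {h. \<exists>r. to_real h = r *\<^sub>R to_real u}" by blast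
    fix x y assume "x \<in> {h. \<exists>r. to_real h = r *\<^sub>R to_real u}" "y \<in> {h. \<exists>r. to_real h = r *\<^sub>R to_real u}"
    then obtain rx ry where "to_real x = rx *\<^sub>R to_real u" "to_real y = ry *\<^sub>R to_real u" by auto
    then show "x - y \<in> {h. \<exists>r. to_real h = r *\<^sub>R to_real u}"
      by (auto simp: to_real_diff intro!: exI[of _ "rx - ry"] simp: algebra_simps)
  qed
  have "L = (\<lambda>h. p + h) ` H"
  proof safe
    fix x assume "x \<in> L"
    then have "x - p \<in> H" unfolding L_def H_def by (auto simp: to_real_diff)
    then show "x \<in> (\<lambda>h. p + h) ` H" by (metis add.commute diff_add_cancel image_eqI)
  next
    fix h assume "h \<in> H"
    then show "p + h \<in> L" unfolding L_def H_def by (auto simp: to_real_add)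
  qed
  then have Lcos: "is_coset L" unfolding is_coset_def using Hsub by blast
  have TL: "T \<subseteq> L"
  proof
    fix t assume t: "t \<in> T"
    have "collinear (to_real ` T)" unfolding collinear_aff_dim using assms(2) by simp
    then obtain u0 where u0: "\<forall>x\<in>to_real ` T. \<forall>y\<in>to_real ` T. \<exists>c. x - y = c *\<^sub>R u0"
      unfolding collinear_def by blast
    obtain c where c: "to_real t - to_real p = c *\<^sub>R u0" using u0 t pq by blast
    obtain c0 where c0: "to_real q - to_real p = c0 *\<^sub>R u0" using u0 pq by blast
    have "c0 \<noteq> 0" using c0 pq(3) to_real_inj by fastforce
    have "to_real t = to_real p + (c / c0) *\<^sub>R to_real u"
      using c c0 \<open>c0 \<noteq> 0\<close> unfolding u_def to_real_diff
      by (metis add.commute diff_add_cancel scaleR_scaleR nonzero_divide_eq_eq times_divide_eq_right mult.commute)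
    then show "t \<in> L" unfolding L_def by blast
  qed
  have inj: "x = y" if hh: "x \<in> L" "y \<in> L" "x$i = y$i" for x y
  proof -
    obtain rx ry where r: "to_real x = to_real p + rx *\<^sub>R to_real u" "to_real y = to_real p + ry *\<^sub>R to_real u"
      using hh unfolding L_def by blast
    have "(to_real x)$i = (to_real y)$i" using hh(3) by simp
    then have "rx * to_real u $ i = ry * to_real u $ i" using r by simp
    then have "rx = ry" using ui by simp
    then show ?thesis using r to_real_inj by metis
  qed
  have conv: "y \<in> Nd" if hh: "x\<in>L" "y\<in>L" "z\<in>L" "x\<in>Nd" "z\<in>Nd" "x$i \<le> y$i" "y$i \<le> z$i" for x y z
  proof -
    obtain rx ry rz where r: "to_real x = to_real p + rx *\<^sub>R to_real u" "to_real y = to_real p + ry *\<^sub>R to_real u"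
      "to_real z = to_real p + rz *\<^sub>R to_real u"
      using hh unfolding L_def by blast
    have "0 \<le> (to_real y)$j" for j
      by (rule conv_real[OF ui r]) (use hh in \<open>auto simp: Nd_def\<close>)
    then show ?thesis unfolding Nd_def by simp
  qed
  define C where "C = En_completion 1 T"
  have CLN: "C \<subseteq> Lam T \<inter> Nd" unfolding C_def using compl_upper[OF assms(1)] .
  have "Lam T \<subseteq> L" using Lam_least[OF Lcos TL] .
  then have CL: "C \<subseteq> L" and CN: "C \<subseteq> Nd" using CLN by auto
  have TC: "T \<subseteq> C" unfolding C_def using compl_T[OF assms(1)] .
  have "\<exists>b w. (\<forall>x\<in>C. \<exists>k::int. x = b + k *s w) \<and> (\<forall>k::int. b + k *s w \<in> Nd \<longrightarrow> b + k *s w \<in> C)"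
  proof (rule main_comb[where i=i and p=p and q=q and L=L and C=C])
    show "C \<subseteq> L" "C \<subseteq> Nd" by (fact CL, fact CN)
    show "\<And>a b c. a\<in>C \<Longrightarrow> b\<in>C \<Longrightarrow> c\<in>C \<Longrightarrow> a - b + c \<in> Nd \<Longrightarrow> a - b + c \<in> C"
      unfolding C_def by (rule compl_closed[OF assms(1)])
    show "\<And>a b c. a\<in>L \<Longrightarrow> b\<in>L \<Longrightarrow> c\<in>L \<Longrightarrow> a - b + c \<in> L"
      by (rule coset_closed[OF Lcos])
    show "\<And>x y. x\<in>L \<Longrightarrow> y\<in>L \<Longrightarrow> x$i = y$i \<Longrightarrow> x = y" by (rule inj)
    show "\<And>x y z. x\<in>L \<Longrightarrow> y\<in>L \<Longrightarrow> z\<in>L \<Longrightarrow> x\<in>Nd \<Longrightarrow> z\<in>Nd \<Longrightarrow> x$i \<le> y$i \<Longrightarrow> y$i \<le> z$i \<Longrightarrow> y\<in>Nd"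
      by (rule conv)
    show "p \<in> C" "q \<in> C" "p$i \<noteq> q$i" using TC pq i by auto
  qed
  then obtain b w where bw: "\<forall>x\<in>C. \<exists>k::int. x = b + k *s w"
      "\<forall>k::int. b + k *s w \<in> Nd \<longrightarrow> b + k *s w \<in> C" by blast
  define Q where "Q = (\<lambda>h. b + h) ` range (\<lambda>k::int. k *s w)"
  have "is_subgroup (range (\<lambda>k::int. k *s w))" unfolding is_subgroup_def
  proof (intro conjI ballI)
    show "0 \<in> range (\<lambda>k::int. k *s w)" by (rule range_eqI[of _ _ 0]) simp
    fix x y assume "x \<in> range (\<lambda>k::int. k *s w)" "y \<in> range (\<lambda>k::int. k *s w)"
    then obtain k l where "x = k *s w" "y = l *s w" by auto
    then have "x - y = (k - l) *s w" by (simp add: vector_sub_rdistrib)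
    then show "x - y \<in> range (\<lambda>k::int. k *s w)" by blast
  qed
  then have Qc: "is_coset Q" unfolding is_coset_def Q_def by blast
  have "T \<subseteq> Q" using TC bw(1) unfolding Q_def by blast
  then have "Lam T \<subseteq> Q" using Lam_least[OF Qc] by blast
  then show "Lam T \<inter> Nd \<subseteq> En_completion 1 T"
    using bw(2) unfolding Q_def C_def[symmetric] by blast
qed

end
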